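(* Let $f\in C_{\mathbb{R}}[0,1]$, $u\in(0,1]$ and $\rho>0$. If $f(u)\neq0$, then there exist a constant $d>0$ and a sequence $\{\rho_k\}_{k\ge1}$ with $\rho_k\to+\infty$ such that $|\Phi_{f,u}(\rho_k)|>\rho e^{d\rho_k}$ for all $k\ge1$.
   Context: $C_{\mathbb{R}}[0,1]$ denotes the real-valued continuous functions on $[0,1]$. For $f\in C[0,1]$ and $u\in(0,1]$, $\Phi_{f,u}(z)=\int_0^u f(s)e^{(u-s)z}\,ds$ ($z\in\mathbb{C}$). *)

theory Defs
  imports "HOL-Analysis.Analysis"
begin

definition Phi :: "(real \<Rightarrow> real) \<Rightarrow> real \<Rightarrow> complex \<Rightarrow> complex" where
  "Phi f u z = integral {0..u} (\<lambda>s. complex_of_real (f s) * exp (complex_of_real (u - s) * z))"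

end

theory Submission
  imports Defs "HOL-Complex_Analysis.Complex_Analysis"
begin

definition GG :: "(real \<Rightarrow> real) \<Rightarrow> real \<Rightarrow> real \<Rightarrow> real" where
  "GG f u x = integral {0..u} (\<lambda>s. f s * exp ((u - s) * x))"

definition SS :: "(real \<Rightarrow> real) \<Rightarrow> real \<Rightarrow> complex \<Rightarrow> complex" where
  "SS f u z = integral {0..u} (\<lambda>s. of_real (f s) / (z - of_real (u - s)))"

definition FN :: "(real \<Rightarrow> real) \<Rightarrow> real \<Rightarrow> nat \<Rightarrow> complex \<Rightarrow> complex" where
  "FN f u N z = integral {0..real N} (\<lambda>x. of_real (GG f u x) * exp (- z * of_real x))"

lemma cont_snd_comp:
  assumes "continuous_on {0..u} f" "A \<subseteq> {0..u}"
  shows "continuous_on (U \<times> A) (\<lambda>p. f (snd p))"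
  by (rule continuous_on_compose2[OF assms(1) continuous_on_snd]) (use assms(2) in auto)

lemma Phi_real:
  assumes cf: "continuous_on {0..u} f"
  shows "Phi f u (of_real x) = of_real (GG f u x)"
proof -
  have c: "continuous_on {0..u} (\<lambda>s. f s * exp ((u - s) * x))"
    by (intro continuous_intros cf)
  have "((\<lambda>s. f s * exp ((u - s) * x)) has_integral GG f u x) {0..u}"
    unfolding GG_def by (rule integrable_integral[OF integrable_continuous_interval[OF c]])
  from has_integral_of_real[OF this, where 'b=complex]
  have "((\<lambda>s. complex_of_real (f s) * exp (complex_of_real (u - s) * complex_of_real x)) has_integral of_real (GG f u x)) {0..u}"
    by (simp add: exp_of_real[symmetric])
  then show ?thesis unfolding Phi_def by (rule integral_unique)
qed

lemma GG_cont:
  assumes cf: "continuous_on {0..u} f"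
  shows "continuous_on UNIV (GG f u)"
proof -
  have "(GG f u has_field_derivative integral (cbox 0 u) (\<lambda>s. f s * (u - s) * exp ((u - s) * x0))) (at x0 within UNIV)" for x0
    unfolding GG_def cbox_interval[symmetric]
  proof (rule leibniz_rule_field_derivative)
    fix x t assume "t \<in> cbox 0 u"
    show "((\<lambda>x. f t * exp ((u - t) * x)) has_field_derivative f t * (u - t) * exp ((u - t) * x)) (at x within UNIV)"
      by (auto intro!: derivative_eq_intros)
  next
    fix x :: real
    show "(\<lambda>s. f s * exp ((u - s) * x)) integrable_on cbox 0 u"
      unfolding cbox_interval by (intro integrable_continuous_interval continuous_intros cf)
  next
    have "continuous_on (UNIV \<times> cbox 0 u) (\<lambda>p. f (snd p))"
      by (rule cont_snd_comp[OF cf]) (auto simp: cbox_interval)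
    then show "continuous_on (UNIV \<times> cbox 0 u) (\<lambda>(x, t). f t * (u - t) * exp ((u - t) * x))"
      by (auto simp: case_prod_beta intro!: continuous_intros)
  qed auto
  then show ?thesis
    by (meson DERIV_continuous continuous_at_imp_continuous_on)
qed

lemma FN_holo:
  assumes cf: "continuous_on {0..u} f"
  shows "FN f u N holomorphic_on UNIV"
  unfolding FN_def cbox_interval[symmetric]
proof (rule leibniz_rule_holomorphic)
  fix z :: complex and t :: real
  show "((\<lambda>z. of_real (GG f u t) * exp (- z * of_real t)) has_field_derivative
          of_real (GG f u t) * (- of_real t * exp (- z * of_real t))) (at z within UNIV)"
    by (auto intro!: derivative_eq_intros)
next
  have gc: "continuous_on UNIV (GG f u)" by (rule GG_cont[OF cf])
  fix z :: complex
  show "(\<lambda>x. of_real (GG f u x) * exp (- z * of_real x)) integrable_on cbox 0 (real N)"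
    by (intro integrable_continuous continuous_intros continuous_on_subset[OF gc]) auto
next
  have gc: "continuous_on UNIV (GG f u)" by (rule GG_cont[OF cf])
  have "continuous_on (UNIV \<times> cbox 0 (real N)) (\<lambda>p. GG f u (snd p))"
    by (rule continuous_on_compose2[OF gc continuous_on_snd]) auto
  then show "continuous_on (UNIV \<times> cbox 0 (real N)) (\<lambda>(z::complex, t). of_real (GG f u t) * (- of_real t * exp (- z * of_real t)))"
    unfolding case_prod_beta by (intro continuous_intros continuous_on_of_real) 
qed auto
lemma "continuous_on (X::(complex*real) set) (\<lambda>x. exp (- (fst x * of_real (snd x))) :: complex)"
  apply (intro continuous_intros)
  done


lemma exp_int:
  fixes r a b \<rho> :: real
  assumes "r > 0" "a \<le> b"
  shows "((\<lambda>x. \<rho> * exp (- r * x)) has_integral (\<rho> * exp (- r * a) / r - \<rho> * exp (- r * b) / r)) {a..b}"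
proof -
  have "((\<lambda>x. \<rho> * exp (- r * x)) has_integral ((\<lambda>x. - \<rho> * exp (- r * x) / r) b - (\<lambda>x. - \<rho> * exp (- r * x) / r) a)) {a..b}"
    apply (rule fundamental_theorem_of_calculus[OF assms(2)])
    using assms(1) by (auto intro!: derivative_eq_intros simp: has_real_derivative_iff_has_vector_derivative[symmetric])
  then show ?thesis by (simp add: algebra_simps)
qed

lemma FN_diff:
  assumes cf: "continuous_on {0..u} f"
    and X: "0 \<le> X" and bd: "\<And>x. x \<ge> X \<Longrightarrow> \<bar>GG f u x\<bar> \<le> \<rho> * exp (d * x)"
    and r: "0 < r" and z: "d + r \<le> Re z" and nm: "X \<le> real n" "n \<le> m"
  shows "cmod (FN f u m z - FN f u n z) \<le> \<rho> * exp (- r * real n) / r"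
proof -
  let ?h = "\<lambda>x. of_real (GG f u x) * exp (- z * of_real x)"
  have gc: "continuous_on UNIV (GG f u)" by (rule GG_cont[OF cf])
  have hi: "?h integrable_on {a..b}" for a b :: real
    by (intro integrable_continuous_interval continuous_intros continuous_on_subset[OF gc]) auto
  have "0 \<le> real n" "real n \<le> real m" using nm X by auto
  from Henstock_Kurzweil_Integration.integral_combine[OF this hi]
  have "integral {0..real n} ?h + integral {real n..real m} ?h = integral {0..real m} ?h" .
  then have eq: "FN f u m z - FN f u n z = integral {real n..real m} ?h"
    unfolding FN_def by (simp add: algebra_simps)
  have "cmod (integral {real n..real m} ?h) \<le> integral {real n..real m} (\<lambda>x. \<rho> * exp (- r * x))"
  proof (rule integral_norm_bound_integral)
    show "?h integrable_on {real n..real m}" by (rule hi)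
    show "(\<lambda>x. \<rho> * exp (- r * x)) integrable_on {real n..real m}"
      using exp_int[OF r, of n m] nm by auto
    fix x assume x: "x \<in> {real n..real m}"
    then have x0: "x \<ge> 0" "x \<ge> X" using X nm by auto
    have "cmod (?h x) = \<bar>GG f u x\<bar> * exp (- Re z * x)"
      by (simp add: norm_mult norm_exp_eq_Re)
    also have "\<dots> \<le> \<rho> * exp (d * x) * exp (- Re z * x)"
      by (rule mult_right_mono[OF bd[OF x0(2)]]) simp
    also have "\<dots> = \<rho> * exp (d * x - Re z * x)" by (simp add: exp_add[symmetric])
    also have "\<dots> \<le> \<rho> * exp (- r * x)"
    proof -
      have "\<rho> \<ge> 0" using bd[OF x0(2)] by (smt (verit) exp_gt_zero mult_nonneg_nonneg zero_le_mult_iff)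
      moreover have "d * x - Re z * x \<le> - r * x" using z x0(1)
        by (smt (verit, ccfv_threshold) mult_right_mono left_diff_distrib)
      ultimately show ?thesis by (simp add: mult_left_mono)
    qed
    finally show "cmod (?h x) \<le> \<rho> * exp (- r * x)" .
  qed
  also have "\<dots> = \<rho> * exp (- r * real n) / r - \<rho> * exp (- r * real m) / r"
    using integral_unique[OF exp_int[OF r, of n m \<rho>]] nm by simp
  also have "\<dots> \<le> \<rho> * exp (- r * real n) / r"
  proof -
    have "\<rho> \<ge> 0" using bd[of X] by (smt (verit) exp_gt_zero mult_nonneg_nonneg zero_le_mult_iff)
    then show ?thesis using r by (simp add: divide_nonneg_pos)
  qed
  finally show ?thesis using eq by simp
qed

definition FL :: "(real \<Rightarrow> real) \<Rightarrow> real \<Rightarrow> complex \<Rightarrow> complex" where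
  "FL f u z = lim (\<lambda>N. FN f u N z)"

lemma exp_seq_0:
  fixes r \<rho> :: real assumes "r > 0"
  shows "(\<lambda>n. \<rho> * exp (- r * real n) / r) \<longlonglongrightarrow> 0"
proof -
  have "(\<lambda>n. exp (- r) ^ n) \<longlonglongrightarrow> 0"
    by (rule LIMSEQ_power_zero) (use assms in auto)
  then have "(\<lambda>n. exp (- r * real n)) \<longlonglongrightarrow> 0"
    by (simp add: exp_of_nat_mult[symmetric] mult.commute)
  then have "(\<lambda>n. \<rho> * exp (- r * real n) / r) \<longlonglongrightarrow> \<rho> * 0 / r"
    by (intro tendsto_intros) (use assms in auto)
  then show ?thesis by simp
qed

lemma FN_conv:
  assumes cf: "continuous_on {0..u} f"
    and X: "0 \<le> X" and bd: "\<And>x. x \<ge> X \<Longrightarrow> \<bar>GG f u x\<bar> \<le> \<rho> * exp (d * x)"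
    and r: "0 < r" and z: "d + r \<le> Re z"
  shows "(\<lambda>N. FN f u N z) \<longlonglongrightarrow> FL f u z"
    and "\<And>n. X \<le> real n \<Longrightarrow> cmod (FN f u n z - FL f u z) \<le> \<rho> * exp (- r * real n) / r"
proof -
  let ?B = "\<lambda>n::nat. \<rho> * exp (- r * real n) / r"
  have D: "cmod (FN f u m z - FN f u n z) \<le> ?B n" if "X \<le> real n" "n \<le> m" for m n
    by (rule FN_diff[OF cf X bd r z that])
  have "Cauchy (\<lambda>N. FN f u N z)"
    unfolding Cauchy_def
  proof (intro allI impI)
    fix e :: real assume e: "e > 0"
    have "eventually (\<lambda>n. ?B n < e) sequentially"
      using order_tendstoD(2)[OF exp_seq_0[OF r, of \<rho>] e] by simp
    then obtain M0 where M0: "\<And>n. n \<ge> M0 \<Longrightarrow> ?B n < e"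
      by (auto simp: eventually_sequentially)
    define M where "M = max M0 (nat \<lceil>X\<rceil>)"
    have "X \<le> real M" unfolding M_def by linarith
    show "\<exists>M. \<forall>m\<ge>M. \<forall>n\<ge>M. dist (FN f u m z) (FN f u n z) < e"
    proof (intro exI allI impI)
      fix m n assume mn: "M \<le> m" "M \<le> n"
      have Xm: "X \<le> real m" "X \<le> real n" using mn \<open>X \<le> real M\<close> by auto
      have Bm: "?B m < e" "?B n < e" using mn M0 unfolding M_def by auto
      show "dist (FN f u m z) (FN f u n z) < e"
      proof (cases "n \<le> m")
        case True
        then show ?thesis using D[OF Xm(2) True] Bm by (simp add: dist_norm)
      next
        case False
        then have "m \<le> n" by simp
        then show ?thesis using D[OF Xm(1) \<open>m \<le> n\<close>] Bm by (simp add: dist_norm norm_minus_commute)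
      qed
    qed
  qed
  then show lim: "(\<lambda>N. FN f u N z) \<longlonglongrightarrow> FL f u z"
    unfolding FL_def using Cauchy_convergent convergent_LIMSEQ_iff by blast
  fix n assume n: "X \<le> real n"
  have "(\<lambda>m. cmod (FN f u m z - FN f u n z)) \<longlonglongrightarrow> cmod (FL f u z - FN f u n z)"
    by (intro tendsto_intros lim)
  moreover have "eventually (\<lambda>m. cmod (FN f u m z - FN f u n z) \<le> ?B n) sequentially"
    using D[OF n] by (auto simp: eventually_sequentially)
  ultimately have "cmod (FL f u z - FN f u n z) \<le> ?B n"
    by (rule tendsto_upperbound) simp
  then show "cmod (FN f u n z - FL f u z) \<le> ?B n" by (simp add: norm_minus_commute)
qed

lemma FL_holo:
  assumes cf: "continuous_on {0..u} f"
    and X: "0 \<le> X" and bd: "\<And>x. x \<ge> X \<Longrightarrow> \<bar>GG f u x\<bar> \<le> \<rho> * exp (d * x)"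
  shows "FL f u holomorphic_on {z. d < Re z}"
proof (rule holomorphic_uniform_sequence[where f="\<lambda>N. FN f u N"])
  show "open {z. d < Re z}" by (rule open_halfspace_Re_gt)
  show "FN f u n holomorphic_on {z. d < Re z}" for n
    using FN_holo[OF cf] holomorphic_on_subset by blast
  fix z0 assume "z0 \<in> {z. d < Re z}"
  then have z0: "d < Re z0" by simp
  define r where "r = (Re z0 - d) / 2"
  have r: "r > 0" using z0 unfolding r_def by simp
  have sub: "cball z0 r \<subseteq> {z. d + r \<le> Re z}"
  proof
    fix z assume "z \<in> cball z0 r"
    then have "\<bar>Re z0 - Re z\<bar> \<le> r"
      using abs_Re_le_cmod[of "z0 - z"] by (simp add: dist_norm)
    then have "Re z0 - Re z \<le> r" by (rule abs_le_D1)
    then have "d + r \<le> Re z" using r_def by (simp add: field_simps)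
    then show "z \<in> {z. d + r \<le> Re z}" by simp
  qed
  have "uniform_limit {z. d + r \<le> Re z} (\<lambda>N. FN f u N) (FL f u) sequentially"
    unfolding uniform_limit_iff
  proof (intro allI impI)
    fix e :: real assume e: "e > 0"
    have "eventually (\<lambda>n. \<rho> * exp (- r * real n) / r < e) sequentially"
      using order_tendstoD(2)[OF exp_seq_0[OF r, of \<rho>] e] by simp
    moreover have "eventually (\<lambda>n. X \<le> real n) sequentially"
      by (simp add: eventually_sequentially) (meson real_arch_simple order.trans of_nat_le_iff)
    ultimately show "eventually (\<lambda>n. \<forall>z\<in>{z. d + r \<le> Re z}. dist (FN f u n z) (FL f u z) < e) sequentially"
    proof eventually_elim
      case (elim n)
      show ?case
      proof
        fix z assume "z \<in> {z. d + r \<le> Re z}"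
        then have "d + r \<le> Re z" by simp
        from FN_conv(2)[OF cf X bd r this elim(2)] elim(1)
        show "dist (FN f u n z) (FL f u z) < e" by (simp add: dist_norm)
      qed
    qed
  qed
  then have "uniform_limit (cball z0 r) (\<lambda>N. FN f u N) (FL f u) sequentially"
    by (rule uniform_limit_on_subset[OF _ sub])
  moreover have "cball z0 r \<subseteq> {z. d < Re z}" using sub r by auto
  ultimately show "\<exists>e>0. cball z0 e \<subseteq> {z. d < Re z} \<and> uniform_limit (cball z0 e) (\<lambda>N. FN f u N) (FL f u) sequentially"
    using r by blast
qed

lemma f_bounded:
  fixes f :: "real \<Rightarrow> real"
  assumes cf: "continuous_on {0..u} f"
  obtains M where "M > 0" "\<And>s. s \<in> {0..u} \<Longrightarrow> \<bar>f s\<bar> \<le> M"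
proof -
  have "bounded (f ` {0..u})"
    by (rule compact_imp_bounded[OF compact_continuous_image[OF cf compact_Icc]])
  then obtain B where "B > 0" "\<And>y. y \<in> f ` {0..u} \<Longrightarrow> norm y \<le> B"
    using bounded_pos by metis
  then show ?thesis using that by force
qed

lemma SS_holo:
  assumes cf: "continuous_on {0..u} f"
  shows "SS f u holomorphic_on {z. 0 < Im z}"
  unfolding SS_def cbox_interval[symmetric]
proof (rule leibniz_rule_holomorphic)
  fix z :: complex and t :: real
  assume z: "z \<in> {z. 0 < Im z}"
  then have nz: "z - of_real (u - t) \<noteq> 0" by (auto simp: complex_eq_iff)
  show "((\<lambda>z. of_real (f t) / (z - of_real (u - t))) has_field_derivative
          - of_real (f t) / (z - of_real (u - t))^2) (at z within {z. 0 < Im z})"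
    using nz by (auto intro!: derivative_eq_intros simp: power2_eq_square)
next
  fix z :: complex
  assume z: "z \<in> {z. 0 < Im z}"
  have nz: "z - of_real (u - t) \<noteq> 0" for t using z by (auto simp: complex_eq_iff)
  have "continuous_on {0..u} (\<lambda>s. complex_of_real (f s))"
    by (intro continuous_intros cf)
  then show "(\<lambda>s. of_real (f s) / (z - of_real (u - s))) integrable_on cbox 0 u"
    unfolding cbox_interval using nz
    by (intro integrable_continuous_interval continuous_intros) auto
next
  have c1: "continuous_on ({z. 0 < Im z} \<times> cbox 0 u) (\<lambda>p. f (snd p))"
    by (rule cont_snd_comp[OF cf]) (auto simp: cbox_interval)
  have nz: "fst p - of_real (u - snd p) \<noteq> 0" if "p \<in> {z. 0 < Im z} \<times> cbox 0 u" for p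
    using that by (auto simp: complex_eq_iff)
  show "continuous_on ({z. 0 < Im z} \<times> cbox 0 u) (\<lambda>(z::complex, t). - of_real (f t) / (z - of_real (u - t))^2)"
    unfolding case_prod_beta
    by (intro continuous_intros continuous_on_of_real c1) (use nz in auto)
next
  show "convex {z. 0 < Im z}" by (rule convex_halfspace_Im_gt)
qed

lemma FN_lim_SS:
  assumes cf: "continuous_on {0..u} f" and u: "0 < u" and z: "u < Re z"
  shows "(\<lambda>N. FN f u N z) \<longlonglongrightarrow> SS f u z"
proof -
  define k where "k x s = of_real (f s) * exp ((of_real (u - s) - z) * of_real x)" for x s :: real
  define w where "w s = of_real (u - s) - z" for s :: real
  have wnz: "w s \<noteq> 0" if "s \<in> {0..u}" for s using z that unfolding w_def by (auto simp: complex_eq_iff)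
  have a: "of_real (GG f u x) * exp (- z * of_real x) = integral {0..u} (k x)" for x
  proof -
    have c: "continuous_on {0..u} (\<lambda>s. f s * exp ((u - s) * x))"
      by (intro continuous_intros cf)
    have "((\<lambda>s. f s * exp ((u - s) * x)) has_integral GG f u x) {0..u}"
      unfolding GG_def by (rule integrable_integral[OF integrable_continuous_interval[OF c]])
    from has_integral_mult_left[OF has_integral_of_real[OF this, where 'b=complex], of "exp (- z * of_real x)"]
    have "((\<lambda>s. complex_of_real (f s * exp ((u - s) * x)) * exp (- z * of_real x)) has_integral
            of_real (GG f u x) * exp (- z * of_real x)) {0..u}" .
    moreover have "complex_of_real (f s * exp ((u - s) * x)) * exp (- z * of_real x) = k x s" for s
      unfolding k_def by (simp add: exp_of_real[symmetric] mult.assoc exp_add[symmetric] algebra_simps)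
    ultimately show ?thesis by (simp add: integral_unique)
  qed
  have ck: "continuous_on (cbox (0, 0) (real N, u)) (\<lambda>(x, s). k x s)" for N
  proof -
    have c1: "continuous_on (cbox (0, 0) (real N, u)) (\<lambda>p. f (snd p))"
      by (rule continuous_on_compose2[OF cf continuous_on_snd]) (auto simp: cbox_Pair_eq)
    show ?thesis unfolding k_def case_prod_beta
      by (intro continuous_intros continuous_on_of_real c1)
  qed
  have b: "FN f u N z = integral {0..u} (\<lambda>s. integral {0..real N} (\<lambda>x. k x s))" for N
    unfolding FN_def a using integral_swap_continuous[OF ck[of N]] by (simp add: cbox_interval)
  have c: "integral {0..real N} (\<lambda>x. k x s) = of_real (f s) * ((exp (w s * of_real (real N)) - 1) / w s)"
    if s: "s \<in> {0..u}" for N s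
  proof -
    have "((\<lambda>x. exp (w s * of_real x)) has_integral
          ((\<lambda>x. exp (w s * of_real x) / w s) (real N) - (\<lambda>x. exp (w s * of_real x) / w s) 0)) {0..real N}"
    proof (rule fundamental_theorem_of_calculus)
      fix x :: real
      have "((\<lambda>y. exp (w s * y) / w s) has_field_derivative exp (w s * of_real x)) (at (of_real x))"
        using wnz[OF s] by (auto intro!: derivative_eq_intros)
      from has_vector_derivative_real_field[OF this]
      show "((\<lambda>x. exp (w s * of_real x) / w s) has_vector_derivative exp (w s * of_real x)) (at x within {0..real N})" .
    qed simp
    from has_integral_mult_right[OF this, of "of_real (f s)"]
    have h2: "((\<lambda>x. k x s) has_integral of_real (f s) * (exp (w s * of_real (real N)) / w s - exp (w s * of_real 0) / w s)) {0..real N}"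
      unfolding k_def w_def by simp
    show ?thesis using integral_unique[OF h2] by (simp add: diff_divide_distrib)
  qed
  obtain M where M: "M > 0" "\<And>s. s \<in> {0..u} \<Longrightarrow> \<bar>f s\<bar> \<le> M" using f_bounded[OF cf] by blast
  define c where "c = Re z - u"
  have c0: "c > 0" using z unfolding c_def by simp
  have d: "FN f u N z - SS f u z = integral {0..u} (\<lambda>s. of_real (f s) * exp (w s * of_real (real N)) / w s)" for N
  proof -
    have cf': "continuous_on {0..u} (\<lambda>s. complex_of_real (f s))" by (intro continuous_intros cf)
    have i1: "(\<lambda>s. of_real (f s) * ((exp (w s * of_real (real N)) - 1) / w s)) integrable_on {0..u}"
      unfolding w_def using wnz[unfolded w_def]
      by (intro integrable_continuous_interval continuous_intros cf') auto
    have i2: "(\<lambda>s. of_real (f s) / (z - of_real (u - s))) integrable_on {0..u}"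
    proof -
      have nz2: "z - of_real (u - s) \<noteq> 0" if "s \<in> {0..u}" for s
        using wnz[OF that] unfolding w_def by (metis minus_diff_eq neg_0_equal_iff_equal)
      show ?thesis
        by (intro integrable_continuous_interval continuous_intros cf' cf) (use nz2 in auto)
    qed
    have "FN f u N z - SS f u z = integral {0..u} (\<lambda>s. of_real (f s) * ((exp (w s * of_real (real N)) - 1) / w s) - of_real (f s) / (z - of_real (u - s)))"
    proof -
      have "integral {0..u} (\<lambda>s. integral {0..real N} (\<lambda>x. k x s)) = integral {0..u} (\<lambda>s. of_real (f s) * ((exp (w s * of_real (real N)) - 1) / w s))"
        by (rule integral_cong) (simp add: c)
      then show ?thesis unfolding b SS_def integral_diff[OF i1 i2] by simp
    qed
    also have "\<dots> = integral {0..u} (\<lambda>s. of_real (f s) * exp (w s * of_real (real N)) / w s)"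
    proof (rule integral_cong)
      fix s assume s: "s \<in> {0..u}"
      have e: "z - of_real (u - s) = - w s" unfolding w_def by simp
      show "of_real (f s) * ((exp (w s * of_real (real N)) - 1) / w s) - of_real (f s) / (z - of_real (u - s)) =
            of_real (f s) * exp (w s * of_real (real N)) / w s"
        unfolding e using wnz[OF s] by (simp add: field_simps)
    qed
    finally show ?thesis .
  qed
  have e: "cmod (FN f u N z - SS f u z) \<le> u * (M * exp (- c * real N) / c)" for N
  proof -
    have "cmod (integral {0..u} (\<lambda>s. of_real (f s) * exp (w s * of_real (real N)) / w s))
          \<le> integral {0..u} (\<lambda>s. M * exp (- c * real N) / c)"
    proof (rule integral_norm_bound_integral)
      have cf': "continuous_on {0..u} (\<lambda>s. complex_of_real (f s))" by (intro continuous_intros cf)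
      show "(\<lambda>s. of_real (f s) * exp (w s * of_real (real N)) / w s) integrable_on {0..u}"
        unfolding w_def using wnz[unfolded w_def]
        by (intro integrable_continuous_interval continuous_intros cf') auto
      show "(\<lambda>s. M * exp (- c * real N) / c) integrable_on {0..u}" by (rule integrable_const_ivl)
      fix s assume s: "s \<in> {0..u}"
      have rw: "Re (w s) = - c - s" unfolding w_def c_def by simp
      have cw: "c \<le> cmod (w s)"
        using abs_Re_le_cmod[of "w s"] s c0 rw by auto
      have ce: "cmod (exp (w s * of_real (real N))) \<le> exp (- c * real N)"
      proof -
        have "0 \<le> s * real N" using s by simp
        then have "(- c - s) * real N \<le> - (c * real N)" by (simp add: algebra_simps)
        then show ?thesis using rw by (simp add: norm_exp_eq_Re)
      qed
      have "cmod (exp (w s * of_real (real N))) / cmod (w s) \<le> exp (- c * real N) / c"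
        by (rule frac_le[OF _ ce c0 cw]) simp
      then have prev: "\<bar>f s\<bar> * (cmod (exp (w s * of_real (real N))) / cmod (w s)) \<le> M * (exp (- c * real N) / c)"
        by (rule mult_mono[OF M(2)[OF s]]) (use M(1) in simp_all)
      have eqn: "cmod (of_real (f s) * exp (w s * of_real (real N)) / w s) = \<bar>f s\<bar> * (cmod (exp (w s * of_real (real N))) / cmod (w s))"
        by (simp only: norm_divide norm_mult norm_of_real times_divide_eq_right)
      show "cmod (of_real (f s) * exp (w s * of_real (real N)) / w s) \<le> M * exp (- c * real N) / c"
        unfolding eqn using prev by (simp only: times_divide_eq_right)
    qed
    moreover have ic: "integral {0..u} (\<lambda>s. M * exp (- c * real N) / c) = u * (M * exp (- c * real N) / c)"
      using u by simp
    ultimately show ?thesis by (simp only: d[of N] ic)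
  qed
  have "(\<lambda>N. u * (M * exp (- c * real N) / c)) \<longlonglongrightarrow> u * 0"
    by (intro tendsto_intros exp_seq_0 c0)
  then have t0: "(\<lambda>N. u * (M * exp (- c * real N) / c)) \<longlonglongrightarrow> 0" by simp
  have "\<forall>N. norm (FN f u N z - SS f u z) \<le> u * (M * exp (- c * real N) / c)" using e by blast
  from Lim_null_comparison[OF always_eventually[OF this] t0]
  have "(\<lambda>N. FN f u N z - SS f u z) \<longlonglongrightarrow> 0" .
  then show ?thesis by (simp add: LIM_zero_iff)
qed

lemma poisson_int:
  fixes p e u :: real
  assumes e: "e > 0" and u: "0 \<le> u"
  shows "((\<lambda>s. e / ((s - p)^2 + e^2)) has_integral (arctan ((u - p) / e) + arctan (p / e))) {0..u}"
proof -
  have "((\<lambda>s. e / ((s - p)^2 + e^2)) has_integral ((\<lambda>s. arctan ((s - p) / e)) u - (\<lambda>s. arctan ((s - p) / e)) 0)) {0..u}"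
  proof (rule fundamental_theorem_of_calculus[OF u])
    fix s :: real
    have pos: "(s - p)^2 + e^2 > 0" using e by (simp add: add_nonneg_pos)
    have "((\<lambda>s. arctan ((s - p) / e)) has_real_derivative (1 / (1 + ((s - p) / e)^2)) * (1 / e)) (at s)"
      by (auto intro!: derivative_eq_intros simp: divide_inverse)
    moreover have "(1 / (1 + ((s - p) / e)^2)) * (1 / e) = e / ((s - p)^2 + e^2)"
      using e pos by (simp add: field_simps power2_eq_square)
    ultimately have "((\<lambda>s. arctan ((s - p) / e)) has_real_derivative e / ((s - p)^2 + e^2)) (at s within {0..u})"
      by (metis has_field_derivative_at_within)
    then show "((\<lambda>s. arctan ((s - p) / e)) has_vector_derivative e / ((s - p)^2 + e^2)) (at s within {0..u})"
      by (simp add: has_real_derivative_iff_has_vector_derivative)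
  qed
  then show ?thesis by (simp add: arctan_minus)
qed

lemma poisson:
  fixes f :: "real \<Rightarrow> real" and \<eta> :: "nat \<Rightarrow> real"
  assumes cf: "continuous_on {0..u} f" and p: "0 < p" "p < u"
    and eta: "\<And>n. \<eta> n > 0" "\<eta> \<longlonglongrightarrow> 0"
    and lim: "(\<lambda>n. integral {0..u} (\<lambda>s. f s * (\<eta> n / ((s - p)^2 + (\<eta> n)^2)))) \<longlonglongrightarrow> 0"
  shows "f p = 0"
proof (rule ccontr)
  assume fp: "f p \<noteq> 0"
  define A where "A = \<bar>f p\<bar>"
  have A: "A > 0" using fp unfolding A_def by simp
  obtain M where M: "M > 0" "\<And>s. s \<in> {0..u} \<Longrightarrow> \<bar>f s\<bar> \<le> M" using f_bounded[OF cf] by blast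
  have pin: "p \<in> {0..u}" using p by simp
  obtain \<delta> where \<delta>: "\<delta> > 0" "\<And>s. s \<in> {0..u} \<Longrightarrow> \<bar>s - p\<bar> < \<delta> \<Longrightarrow> \<bar>f s - f p\<bar> < A / 2"
    using cf pin A unfolding continuous_on_iff dist_real_def
    by (metis half_gt_zero)
  define K where "K = 2 * M * u / \<delta>^2"
  have key: "A / 2 * (arctan ((u - p) / e) + arctan (p / e)) \<le> \<bar>integral {0..u} (\<lambda>s. f s * (e / ((s - p)^2 + e^2)))\<bar> + K * e"
    if e: "e > 0" for e
  proof -
    define P where "P s = e / ((s - p)^2 + e^2)" for s
    define I where "I = arctan ((u - p) / e) + arctan (p / e)"
    have Pnn: "P s \<ge> 0" for s unfolding P_def using e by (simp add: add_nonneg_pos less_imp_le)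
    have PI: "(P has_integral I) {0..u}" unfolding P_def I_def by (rule poisson_int[OF e]) (use p in simp)
    have cP: "continuous_on {0..u} P" unfolding P_def
      by (intro continuous_intros) (use e in \<open>auto simp: add_nonneg_pos\<close>)
    have fP: "(\<lambda>s. f s * P s) integrable_on {0..u}"
      by (intro integrable_continuous_interval continuous_on_mult cf cP)
    have gP: "(\<lambda>s. (f s - f p) * P s) integrable_on {0..u}"
      by (intro integrable_continuous_interval continuous_on_mult continuous_on_diff cf cP continuous_on_const)
    have split: "integral {0..u} (\<lambda>s. f s * P s) = integral {0..u} (\<lambda>s. (f s - f p) * P s) + f p * I"
    proof -
      have "((\<lambda>s. (f s - f p) * P s + f p * P s) has_integral (integral {0..u} (\<lambda>s. (f s - f p) * P s) + f p * I)) {0..u}"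
        by (intro has_integral_add integrable_integral gP has_integral_mult_right PI)
      moreover have "(\<lambda>s. (f s - f p) * P s + f p * P s) = (\<lambda>s. f s * P s)"
        by (simp add: algebra_simps)
      ultimately show ?thesis by (simp add: integral_unique)
    qed
    have bnd: "\<bar>integral {0..u} (\<lambda>s. (f s - f p) * P s)\<bar> \<le> A / 2 * I + K * e"
    proof -
      have "norm (integral {0..u} (\<lambda>s. (f s - f p) * P s)) \<le> integral {0..u} (\<lambda>s. A / 2 * P s + 2 * M * e / \<delta>^2)"
      proof (rule integral_norm_bound_integral[OF gP])
        show "(\<lambda>s. A / 2 * P s + 2 * M * e / \<delta>^2) integrable_on {0..u}"
          by (intro integrable_continuous_interval continuous_intros cP)
        fix s assume s: "s \<in> {0..u}"
        show "norm ((f s - f p) * P s) \<le> A / 2 * P s + 2 * M * e / \<delta>^2"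
        proof (cases "\<bar>s - p\<bar> < \<delta>")
          case True
          have "\<bar>f s - f p\<bar> * P s \<le> A / 2 * P s"
            using \<delta>(2)[OF s True] Pnn[of s] by (intro mult_right_mono) auto
          moreover have "0 \<le> 2 * M * e / \<delta>^2" using M(1) e by simp
          ultimately show ?thesis by (simp add: abs_mult Pnn abs_of_nonneg)
        next
          case False
          then have "\<delta>^2 \<le> (s - p)^2"
            using \<delta>(1) by (metis abs_le_square_iff abs_of_pos not_less)
          then have "\<delta>^2 \<le> (s - p)^2 + e^2" by (smt (verit) zero_le_power2)
          moreover have "0 < ((s - p)^2 + e^2) * \<delta>^2"
            using e \<delta>(1) by (intro mult_pos_pos) (auto simp: add_nonneg_pos)
          ultimately have Pb: "P s \<le> e / \<delta>^2" unfolding P_def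
            using e by (intro divide_left_mono) auto
          have fb: "\<bar>f s - f p\<bar> \<le> 2 * M" using M(2)[OF s] M(2)[OF pin] by linarith
          have "\<bar>f s - f p\<bar> * P s \<le> 2 * M * (e / \<delta>^2)"
            by (rule mult_mono[OF fb Pb]) (use M(1) Pnn in auto)
          moreover have "0 \<le> A / 2 * P s" using A Pnn[of s] by simp
          ultimately show ?thesis by (simp add: abs_mult Pnn abs_of_nonneg)
        qed
      qed
      moreover have "integral {0..u} (\<lambda>s. A / 2 * P s + 2 * M * e / \<delta>^2) = A / 2 * I + K * e"
      proof -
        have c: "((\<lambda>s. 2 * M * e / \<delta>^2) has_integral u * (2 * M * e / \<delta>^2)) {0..u}"
          using has_integral_const_real[where c="2 * M * e / \<delta>^2" and a=0 and b=u] p by simp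
        have "((\<lambda>s. A / 2 * P s + 2 * M * e / \<delta>^2) has_integral (A / 2 * I + u * (2 * M * e / \<delta>^2))) {0..u}"
          by (intro has_integral_add has_integral_mult_right PI c)
        from integral_unique[OF this] show ?thesis unfolding K_def by (simp add: field_simps)
      qed
      ultimately show ?thesis by simp
    qed
    have "A * I = \<bar>f p * I\<bar>"
      unfolding A_def abs_mult using pin
      by (simp add: I_def) (smt (verit) arctan_less_zero_iff divide_pos_pos e p)
    also have "\<dots> \<le> \<bar>integral {0..u} (\<lambda>s. f s * P s)\<bar> + \<bar>integral {0..u} (\<lambda>s. (f s - f p) * P s)\<bar>"
      using split by linarith
    finally have "A * I \<le> \<bar>integral {0..u} (\<lambda>s. f s * P s)\<bar> + A / 2 * I + K * e" using bnd by linarith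
    then show ?thesis unfolding P_def I_def by linarith
  qed
  define m where "m = min p (u - p)"
  have m: "m > 0" using p unfolding m_def by simp
  have ev1: "eventually (\<lambda>n. \<eta> n < m) sequentially"
    using order_tendstoD(2)[OF eta(2) m] .
  have ev2: "eventually (\<lambda>n. \<bar>integral {0..u} (\<lambda>s. f s * (\<eta> n / ((s - p)^2 + (\<eta> n)^2)))\<bar> < A * pi / 8) sequentially"
  proof -
    have "(\<lambda>n. \<bar>integral {0..u} (\<lambda>s. f s * (\<eta> n / ((s - p)^2 + (\<eta> n)^2)))\<bar>) \<longlonglongrightarrow> \<bar>0\<bar>"
      by (intro tendsto_intros lim)
    then show ?thesis using A by (intro order_tendstoD(2)) (auto simp: pi_gt_zero)
  qed
  have ev3: "eventually (\<lambda>n. K * \<eta> n < A * pi / 8) sequentially"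
  proof -
    have "(\<lambda>n. K * \<eta> n) \<longlonglongrightarrow> K * 0" by (intro tendsto_intros eta(2))
    then show ?thesis using A by (intro order_tendstoD(2)) (auto simp: pi_gt_zero)
  qed
  from ev1 ev2 ev3 have "eventually (\<lambda>n. False) sequentially"
  proof eventually_elim
    case (elim n)
    let ?e = "\<eta> n"
    have e: "?e > 0" by (rule eta(1))
    have "1 \<le> (u - p) / ?e" "1 \<le> p / ?e"
      using elim(1) e unfolding m_def by (auto simp: field_simps)
    then have "pi / 4 \<le> arctan ((u - p) / ?e)" "pi / 4 \<le> arctan (p / ?e)"
      using arctan_monotone' arctan_one by metis+
    then have "A / 2 * (pi / 2) \<le> A / 2 * (arctan ((u - p) / ?e) + arctan (p / ?e))"
      using A by (intro mult_left_mono) auto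
    also have "\<dots> \<le> \<bar>integral {0..u} (\<lambda>s. f s * (?e / ((s - p)^2 + ?e^2)))\<bar> + K * ?e"
      by (rule key[OF e])
    finally show False using elim(2,3) by simp
  qed
  then show False by simp
qed

lemma SS_eq_FL:
  assumes cf: "continuous_on {0..u} f" and u: "0 < u"
    and X: "0 \<le> X" and bd: "\<And>x. x \<ge> X \<Longrightarrow> \<bar>GG f u x\<bar> \<le> \<rho> * exp (d * x)"
    and du: "d < u" and z: "d < Re z" "0 < Im z"
  shows "SS f u z = FL f u z"
proof -
  let ?s = "{z. u < Re z} \<inter> {z. 0 < Im z}"
  let ?s' = "{z. d < Re z} \<inter> {z. 0 < Im z}"
  have o1: "open ?s"
    by (intro open_Int open_halfspace_Re_gt open_halfspace_Im_gt)
  have o2: "open ?s'"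
    by (intro open_Int open_halfspace_Re_gt open_halfspace_Im_gt)
  have "Complex (u + 1) 1 \<in> ?s" by simp
  then have ne: "?s \<noteq> {}" by blast
  have conn: "connected ?s'"
    by (intro convex_connected convex_Int convex_halfspace_Re_gt convex_halfspace_Im_gt)
  have sub: "?s \<subseteq> ?s'" using du by auto
  have h1: "SS f u holomorphic_on ?s'"
    by (rule holomorphic_on_subset[OF SS_holo[OF cf]]) auto
  have h2: "FL f u holomorphic_on ?s'"
    by (rule holomorphic_on_subset[OF FL_holo[OF cf X bd]]) auto
  have zin: "z \<in> ?s'" using z by simp
  have eq: "SS f u w = FL f u w" if w: "w \<in> ?s" for w
  proof -
    have wu: "u < Re w" using w by simp
    define r where "r = Re w - d"
    have r: "0 < r" "d + r \<le> Re w" using wu du unfolding r_def by auto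
    from FN_lim_SS[OF cf u wu] FN_conv(1)[OF cf X bd r]
    show "SS f u w = FL f u w" by (rule LIMSEQ_unique)
  qed
  show ?thesis by (rule analytic_continuation_open[OF o1 o2 ne conn sub h1 h2 eq zin])
qed

lemma FL_real:
  assumes cf: "continuous_on {0..u} f"
    and X: "0 \<le> X" and bd: "\<And>x. x \<ge> X \<Longrightarrow> \<bar>GG f u x\<bar> \<le> \<rho> * exp (d * x)"
    and a: "d < a"
  shows "Im (FL f u (of_real a)) = 0"
proof -
  have gc: "continuous_on UNIV (GG f u)" by (rule GG_cont[OF cf])
  have "Im (FN f u N (of_real a)) = 0" for N
  proof -
    have c: "continuous_on {0..real N} (\<lambda>x. GG f u x * exp (- a * x))"
      by (intro continuous_intros continuous_on_subset[OF gc]) auto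
    from has_integral_of_real[OF integrable_integral[OF integrable_continuous_interval[OF c]], where 'b=complex]
    have "((\<lambda>x. complex_of_real (GG f u x) * exp (- complex_of_real a * complex_of_real x)) has_integral
           complex_of_real (integral {0..real N} (\<lambda>x. GG f u x * exp (- a * x)))) {0..real N}"
      by (simp add: exp_of_real[symmetric])
    then show ?thesis unfolding FN_def by (simp add: integral_unique)
  qed
  moreover have r: "0 < (a - d)" "d + (a - d) \<le> Re (of_real a)" using a by auto
  from tendsto_Im[OF FN_conv(1)[OF cf X bd r]]
  have "(\<lambda>N. Im (FN f u N (of_real a))) \<longlonglongrightarrow> Im (FL f u (of_real a))" .
  ultimately show ?thesis by (simp add: LIMSEQ_const_iff)
qed

lemma Im_div_Complex:
  fixes r x y :: real
  shows "Im (complex_of_real r / Complex x y) = - (r * (y / (x^2 + y^2)))"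
  by (simp add: divide_complex_def)

lemma Im_SS:
  assumes cf: "continuous_on {0..u} f" and e: "0 < e"
  shows "Im (SS f u (Complex (u - p) e)) = - integral {0..u} (\<lambda>s. f s * (e / ((s - p)^2 + e^2)))"
proof -
  let ?z = "Complex (u - p) e"
  have nz: "?z - of_real (u - s) \<noteq> 0" for s using e by (auto simp: complex_eq_iff)
  have cf': "continuous_on {0..u} (\<lambda>s. complex_of_real (f s))" by (intro continuous_intros cf)
  have "(\<lambda>s. of_real (f s) / (?z - of_real (u - s))) integrable_on {0..u}"
    using nz by (intro integrable_continuous_interval continuous_intros cf') auto
  from has_integral_Im[OF integrable_integral[OF this]]
  have "((\<lambda>s. Im (of_real (f s) / (?z - of_real (u - s)))) has_integral Im (SS f u ?z)) {0..u}"
    unfolding SS_def .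
  moreover have "Im (of_real (f s) / (?z - of_real (u - s))) = - (f s * (e / ((s - p)^2 + e^2)))" for s
  proof -
    have "?z - of_real (u - s) = Complex (s - p) e" by (simp add: complex_eq_iff)
    then show ?thesis by (simp add: Im_div_Complex)
  qed
  ultimately have "((\<lambda>s. - (f s * (e / ((s - p)^2 + e^2)))) has_integral Im (SS f u ?z)) {0..u}" by simp
  from has_integral_neg[OF this] have "((\<lambda>s. f s * (e / ((s - p)^2 + e^2))) has_integral - Im (SS f u ?z)) {0..u}"
    by simp
  then show ?thesis by (simp add: integral_unique)
qed

lemma vanish_lemma:
  fixes f :: "real \<Rightarrow> real"
  assumes cf: "continuous_on {0..u} f" and u: "0 < u" and d: "0 < d" "d < u"
    and X: "0 \<le> X" and bd: "\<And>x. x \<ge> X \<Longrightarrow> \<bar>GG f u x\<bar> \<le> \<rho> * exp (d * x)"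
    and p: "0 < p" "p < u - d"
  shows "f p = 0"
proof -
  define \<eta> where "\<eta> n = inverse (real (Suc n))" for n
  have eta1: "\<And>n. \<eta> n > 0" unfolding \<eta>_def by simp
  have eta2: "\<eta> \<longlonglongrightarrow> 0" unfolding \<eta>_def by (rule LIMSEQ_inverse_real_of_nat)
  define a where "a = u - p"
  have a: "d < a" using p unfolding a_def by simp
  have eqn: "integral {0..u} (\<lambda>s. f s * (\<eta> n / ((s - p)^2 + (\<eta> n)^2))) = - Im (FL f u (Complex a (\<eta> n)))" for n
  proof -
    have "SS f u (Complex a (\<eta> n)) = FL f u (Complex a (\<eta> n))"
      by (rule SS_eq_FL[OF cf u X bd d(2)]) (use a eta1 in auto)
    with Im_SS[OF cf eta1[of n], of p] show ?thesis unfolding a_def by simp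
  qed
  have "FL f u holomorphic_on {z. d < Re z}" by (rule FL_holo[OF cf X bd])
  then have "continuous_on {z. d < Re z} (FL f u)" by (rule holomorphic_on_imp_continuous_on)
  then have ic: "isCont (FL f u) (Complex a 0)"
    using a by (simp add: continuous_on_eq_continuous_at[OF open_halfspace_Re_gt])
  have "(\<lambda>n. Complex a (\<eta> n)) \<longlonglongrightarrow> Complex a 0"
    by (intro tendsto_Complex tendsto_const eta2)
  from isCont_tendsto_compose[OF ic this]
  have "(\<lambda>n. FL f u (Complex a (\<eta> n))) \<longlonglongrightarrow> FL f u (Complex a 0)" .
  from tendsto_minus[OF tendsto_Im[OF this]]
  have "(\<lambda>n. - Im (FL f u (Complex a (\<eta> n)))) \<longlonglongrightarrow> - Im (FL f u (Complex a 0))" .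
  moreover have "Im (FL f u (Complex a 0)) = 0"
    using FL_real[OF cf X bd a] by (simp add: complex_of_real_def)
  ultimately have lim: "(\<lambda>n. integral {0..u} (\<lambda>s. f s * (\<eta> n / ((s - p)^2 + (\<eta> n)^2)))) \<longlonglongrightarrow> 0"
    unfolding eqn by simp
  have pu: "p < u" using p d by simp
  show ?thesis by (rule poisson[OF cf p(1) pu eta1 eta2 lim])
qed

theorem lemma4p5:
  fixes f :: "real \<Rightarrow> real" and u \<rho> :: real
  assumes "continuous_on {0..1} f"
    and "0 < u" and "u \<le> 1"
    and "\<rho> > 0"
    and "f u \<noteq> 0"
  shows "\<exists>d>0. \<exists>r :: nat \<Rightarrow> real. filterlim r at_top sequentially \<and>
           (\<forall>k\<ge>1. cmod (Phi f u (complex_of_real (r k))) > \<rho> * exp (d * r k))"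
proof (rule ccontr)
  assume H: "\<not> ?thesis"
  have cf: "continuous_on {0..u} f"
    by (rule continuous_on_subset[OF assms(1)]) (use assms(3) in auto)
  have bound: "\<exists>X\<ge>0. \<forall>x\<ge>X. \<bar>GG f u x\<bar> \<le> \<rho> * exp (d * x)" if d: "d > 0" for d
  proof (rule ccontr)
    assume "\<not> (\<exists>X\<ge>0. \<forall>x\<ge>X. \<bar>GG f u x\<bar> \<le> \<rho> * exp (d * x))"
    then have ex: "\<exists>x. x \<ge> real k \<and> \<bar>GG f u x\<bar> > \<rho> * exp (d * x)" for k
      by (metis of_nat_0_le_iff not_le)
    define r where "r k = (SOME x. x \<ge> real k \<and> \<bar>GG f u x\<bar> > \<rho> * exp (d * x))" for k
    have r: "r k \<ge> real k" "\<bar>GG f u (r k)\<bar> > \<rho> * exp (d * r k)" for k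
      using someI_ex[OF ex[of k]] unfolding r_def by auto
    have "filterlim r at_top sequentially"
      by (rule filterlim_at_top_mono[OF filterlim_real_sequentially]) (use r(1) in auto)
    moreover have "\<forall>k\<ge>1. cmod (Phi f u (complex_of_real (r k))) > \<rho> * exp (d * r k)"
      using r(2) by (simp add: Phi_real[OF cf])
    ultimately show False using H d by blast
  qed
  have zero: "f s = 0" if s: "0 < s" "s < u" for s
  proof -
    define d where "d = (u - s) / 2"
    have d: "0 < d" "d < u" using s unfolding d_def by auto
    obtain X where X: "X \<ge> 0" "\<And>x. x \<ge> X \<Longrightarrow> \<bar>GG f u x\<bar> \<le> \<rho> * exp (d * x)"
      using bound[OF d(1)] by blast
    show ?thesis by (rule vanish_lemma[OF cf assms(2) d X]) (use s in \<open>auto simp: d_def field_simps\<close>)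
  qed
  have uin: "u \<in> {0..u}" using assms(2) by simp
  have A: "\<bar>f u\<bar> > 0" using assms(5) by simp
  obtain \<delta> where \<delta>: "\<delta> > 0" "\<And>s. s \<in> {0..u} \<Longrightarrow> \<bar>s - u\<bar> < \<delta> \<Longrightarrow> \<bar>f s - f u\<bar> < \<bar>f u\<bar>"
    using cf uin A unfolding continuous_on_iff dist_real_def by metis
  define s where "s = u - min \<delta> u / 2"
  have s: "0 < s" "s < u" "s \<in> {0..u}" "\<bar>s - u\<bar> < \<delta>"
    using \<delta>(1) assms(2) unfolding s_def by (auto simp: min_def)
  from \<delta>(2)[OF s(3,4)] zero[OF s(1,2)] show False by simp
qed

end
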